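(* Consider the stochastic extra-momentum scheme with non-negative parameters $\alpha,\gamma,\tau$: starting from $z^0\in\mathcal Z$ with $z^{-1}:=z^0$ and $\hat F(z^{-1}):=\hat F(z^0)$, for $k\ge0$, $$z^{k+1}=P_{\mathcal Z}\big(z^k-\alpha\hat F(z^k)+\gamma(z^k-z^{k-1})-\tau(\hat F(z^k)-\hat F(z^{k-1}))\big).$$ Then for every $k\ge0$, $$\mathbb E\Big[\Big(\tfrac12+\tfrac{\alpha\mu}{2}-\tfrac{\gamma}{2}\Big)\|z^{k+1}-z^*\|^2+\alpha(z^{k+1}-z^* )^\top(\hat F(z^k)-\hat F(z^{k+1}))+\tfrac14\|z^{k+1}-z^k\|^2\Big]$$ $$\le\mathbb E\Big[\tfrac12\|z^k-z^*\|^2+\tau(z^k-z^* )^\top(\hat F(z^{k-1})-\hat F(z^k))+\Big(2\tau^2L^2+\tfrac{\gamma}{2}\Big)\|z^k-z^{k-1}\|^2\Big]+8\tau^2\sigma^2+\frac{\alpha\delta^2}{2\mu}.$$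
   Context: Let $\mathcal Z\subseteq\mathbb R^n$ be a nonempty closed convex set. Let $F:\mathcal Z\to\mathbb R^n$ satisfy $(F(z)-F(z'))^\top(z-z')\ge\mu\|z-z'\|^2$ and $\|F(z)-F(z')\|\le L\|z-z'\|$ for all $z,z'\in\mathcal Z$, where $0<\mu\le L$. Let $z^*$ be the unique point of $\mathcal Z$ with $F(z^* )^\top(z-z^* )\ge 0$ for all $z\in\mathcal Z$. $P_{\mathcal Z}$ denotes Euclidean projection onto $\mathcal Z$. A stochastic oracle returns $\hat F(z,\xi)$ for a random sample $\xi$, and satisfies, for every $z\in\mathcal Z$, $\mathbb E_\xi\|\hat F(z,\xi)-F(z)\|\le\delta$ and $\mathbb E_\xi\|\hat F(z,\xi)-F(z)\|^2\le\sigma^2$ for constants $\delta,\sigma\ge0$. Each oracle call $\hat F(z^j)$ means $\hat F(z^j,\xi^j)$ with a fresh sample $\xi^j$ independent of all previous samples (one sample per iterate, reused wherever $\hat F(z^j)$ appears). *)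

theory Defs
  imports "HOL-Probability.Probability"
begin

text \<open>Iterates of the stochastic extra-momentum scheme, as a function of the sample
  sequence w (w k is the sample xi^k used at iterate z^k). Convention: z^{-1} = z^0 and
  the oracle value at z^{-1} is the oracle value at z^0 with sample xi^0; this is realised
  by nat subtraction k - 1 = 0 for k = 0.\<close>

fun em_iter :: "'a::euclidean_space set \<Rightarrow> ('a \<Rightarrow> 'x \<Rightarrow> 'a) \<Rightarrow> real \<Rightarrow> real \<Rightarrow> real
    \<Rightarrow> 'a \<Rightarrow> (nat \<Rightarrow> 'x) \<Rightarrow> nat \<Rightarrow> 'a" where
  "em_iter Z Fh \<alpha> \<gamma> \<tau> z0 w 0 = z0"
| "em_iter Z Fh \<alpha> \<gamma> \<tau> z0 w (Suc k) =
     closest_point Z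
       (em_iter Z Fh \<alpha> \<gamma> \<tau> z0 w k
        - \<alpha> *\<^sub>R Fh (em_iter Z Fh \<alpha> \<gamma> \<tau> z0 w k) (w k)
        + \<gamma> *\<^sub>R (em_iter Z Fh \<alpha> \<gamma> \<tau> z0 w k - em_iter Z Fh \<alpha> \<gamma> \<tau> z0 w (k - 1))
        - \<tau> *\<^sub>R (Fh (em_iter Z Fh \<alpha> \<gamma> \<tau> z0 w k) (w k)
                   - Fh (em_iter Z Fh \<alpha> \<gamma> \<tau> z0 w (k - 1)) (w (k - 1))))"

end

theory Submission
  imports Defs
begin

lemma real_comb:
  fixes td Fd pd qd qe qt nd ne nt np nq na nc ne1 X \<alpha> \<gamma> \<tau> \<mu> \<delta> L :: real
  assumes P1: "td + \<alpha> * Fd - \<gamma> * pd + \<tau> * qd \<le> 0"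
    and P2: "td = (nd\<^sup>2 - ne\<^sup>2 + nt\<^sup>2) / 2"
    and P3: "\<gamma> * pd \<le> \<gamma> / 2 * np\<^sup>2 + \<gamma> / 2 * nd\<^sup>2"
    and P4a: "\<tau> * qd = \<tau> * qe + \<tau> * qt"
    and P5: "- (\<tau> * qt) \<le> nt\<^sup>2 / 4 + \<tau>\<^sup>2 * nq\<^sup>2"
    and P6a: "\<tau>\<^sup>2 * nq\<^sup>2 \<le> 2 * \<tau>\<^sup>2 * L\<^sup>2 * np\<^sup>2 + 4 * \<tau>\<^sup>2 * na\<^sup>2 + 4 * \<tau>\<^sup>2 * nc\<^sup>2"
    and P7a: "\<alpha> * Fd \<ge> \<alpha> * X - \<alpha> * (ne1 * nd) + \<alpha> * \<mu> * nd\<^sup>2"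
    and P8: "- (\<alpha> * \<mu> / 2 * nd\<^sup>2) + \<alpha> * \<delta> * nd \<le> \<alpha> * \<delta>\<^sup>2 / (2 * \<mu>)"
  shows "(1/2 + \<alpha> * \<mu> / 2 - \<gamma> / 2) * nd\<^sup>2 + \<alpha> * X + 1/4 * nt\<^sup>2
         \<le> 1/2 * ne\<^sup>2 + \<tau> * (- qe) + (2 * \<tau>\<^sup>2 * L\<^sup>2 + \<gamma> / 2) * np\<^sup>2
           + 4 * \<tau>\<^sup>2 * na\<^sup>2 + 4 * \<tau>\<^sup>2 * nc\<^sup>2
           + \<alpha> * (ne1 * nd - \<delta> * nd) + \<alpha> * \<delta>\<^sup>2 / (2 * \<mu>)"
proof -
  have a: "\<alpha> * \<mu> * nd\<^sup>2 = 2 * (\<alpha> * \<mu> / 2 * nd\<^sup>2)" by simp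
  have b: "\<alpha> * (ne1 * nd - \<delta> * nd) = \<alpha> * (ne1 * nd) - \<alpha> * \<delta> * nd" by (simp add: algebra_simps)
  have c: "(1/2 + \<alpha> * \<mu> / 2 - \<gamma> / 2) * nd\<^sup>2 = 1/2 * nd\<^sup>2 + \<alpha> * \<mu> / 2 * nd\<^sup>2 - \<gamma> / 2 * nd\<^sup>2" by (simp add: algebra_simps)
  have d: "(2 * \<tau>\<^sup>2 * L\<^sup>2 + \<gamma> / 2) * np\<^sup>2 = 2 * \<tau>\<^sup>2 * L\<^sup>2 * np\<^sup>2 + \<gamma> / 2 * np\<^sup>2" by (simp add: algebra_simps)
  have e: "\<tau> * (- qe) = - (\<tau> * qe)" by simp
  show ?thesis unfolding b c d e using P1 P2 P3 P4a P5 P6a P7a P8 a by argo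
qed

lemma pw:
  fixes zk zk1 zkm zs Fk Fkm Fk1 Gk Gkm Gk1 :: "'a::real_inner"
  assumes proj: "(zk - \<alpha> *\<^sub>R Fk + \<gamma> *\<^sub>R (zk - zkm) - \<tau> *\<^sub>R (Fk - Fkm) - zk1) \<bullet> (zs - zk1) \<le> 0"
    and strong: "\<mu> * (norm (zk1 - zs))\<^sup>2 \<le> Gk1 \<bullet> (zk1 - zs)"
    and lipk: "norm (Gk - Gkm) \<le> L * norm (zk - zkm)"
    and pos: "0 < \<mu>" "0 \<le> \<alpha>" "0 \<le> \<gamma>" "0 \<le> \<tau>" "0 \<le> L"
  shows "(1/2 + \<alpha> * \<mu> / 2 - \<gamma> / 2) * (norm (zk1 - zs))\<^sup>2 + \<alpha> * ((zk1 - zs) \<bullet> (Fk - Fk1))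
           + 1/4 * (norm (zk1 - zk))\<^sup>2
         \<le> 1/2 * (norm (zk - zs))\<^sup>2 + \<tau> * ((zk - zs) \<bullet> (Fkm - Fk))
           + (2 * \<tau>\<^sup>2 * L\<^sup>2 + \<gamma> / 2) * (norm (zk - zkm))\<^sup>2
           + 4 * \<tau>\<^sup>2 * (norm (Fk - Gk))\<^sup>2 + 4 * \<tau>\<^sup>2 * (norm (Fkm - Gkm))\<^sup>2
           + \<alpha> * (norm (Fk1 - Gk1) * norm (zk1 - zs) - \<delta> * norm (zk1 - zs)) + \<alpha> * \<delta>\<^sup>2 / (2 * \<mu>)"
proof -
  define d where "d = zk1 - zs"
  define e where "e = zk - zs"
  define t where "t = zk1 - zk"
  define p where "p = zk - zkm"
  define q where "q = Fk - Fkm"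
  define a where "a = Fk - Gk"
  define c where "c = Gkm - Fkm"
  define b where "b = Gk - Gkm"
  have td: "t = d - e" by (simp add: t_def d_def e_def)
  have qabc: "q = a + b + c" by (simp add: q_def a_def b_def c_def)
  have P1: "t \<bullet> d + \<alpha> * (Fk \<bullet> d) - \<gamma> * (p \<bullet> d) + \<tau> * (q \<bullet> d) \<le> 0"
  proof -
    have eq1: "zk - \<alpha> *\<^sub>R Fk + \<gamma> *\<^sub>R (zk - zkm) - \<tau> *\<^sub>R (Fk - Fkm) - zk1 = - (t + \<alpha> *\<^sub>R Fk - \<gamma> *\<^sub>R p + \<tau> *\<^sub>R q)"
      by (simp add: t_def p_def q_def algebra_simps)
    have eq2: "zs - zk1 = - d" by (simp add: d_def)
    show ?thesis using proj unfolding eq1 eq2 by (simp add: inner_add_left inner_diff_left)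
  qed
  have P2: "t \<bullet> d = ((norm d)\<^sup>2 - (norm e)\<^sup>2 + (norm t)\<^sup>2) / 2"
  proof -
    have "e = d - t" by (simp add: td)
    then have "(norm e)\<^sup>2 = (norm d)\<^sup>2 - 2 * (t \<bullet> d) + (norm t)\<^sup>2"
      by (simp add: power2_norm_eq_inner inner_diff_left inner_diff_right inner_commute)
    then show ?thesis by simp
  qed
  have P3: "\<gamma> * (p \<bullet> d) \<le> \<gamma> / 2 * (norm p)\<^sup>2 + \<gamma> / 2 * (norm d)\<^sup>2"
  proof -
    have "p \<bullet> d \<le> norm p * norm d" by (rule Cauchy_Schwarz_ineq2[THEN abs_le_D1])
    also have "\<dots> \<le> ((norm p)\<^sup>2 + (norm d)\<^sup>2) / 2" using sum_squares_bound[of "norm p" "norm d"] by simp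
    finally have h: "p \<bullet> d \<le> ((norm p)\<^sup>2 + (norm d)\<^sup>2) / 2" .
    have "\<gamma> * (p \<bullet> d) \<le> \<gamma> * (((norm p)\<^sup>2 + (norm d)\<^sup>2) / 2)"
      by (rule mult_left_mono[OF h pos(3)])
    also have "\<dots> = \<gamma> / 2 * (norm p)\<^sup>2 + \<gamma> / 2 * (norm d)\<^sup>2" by (simp add: field_simps)
    finally show ?thesis .
  qed
  have P4: "q \<bullet> d = q \<bullet> e + q \<bullet> t" by (simp add: td inner_diff_right)
  have P5: "- (\<tau> * (q \<bullet> t)) \<le> (norm t)\<^sup>2 / 4 + \<tau>\<^sup>2 * (norm q)\<^sup>2"
  proof -
    have "0 \<le> (norm ((1/2) *\<^sub>R t + \<tau> *\<^sub>R q))\<^sup>2" by simp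
    also have "\<dots> = (norm t)\<^sup>2 / 4 + \<tau> * (q \<bullet> t) + \<tau>\<^sup>2 * (norm q)\<^sup>2"
      by (simp only: power2_norm_eq_inner) (simp add: inner_add_left inner_add_right inner_commute power2_eq_square algebra_simps)
    finally show ?thesis by simp
  qed
  have P6: "(norm q)\<^sup>2 \<le> 2 * L\<^sup>2 * (norm p)\<^sup>2 + 4 * (norm a)\<^sup>2 + 4 * (norm c)\<^sup>2"
  proof -
    have "norm q \<le> norm b + (norm a + norm c)"
      unfolding qabc by (metis add.commute add.left_commute norm_triangle_le norm_triangle_ineq add_mono order_refl)
    then have "(norm q)\<^sup>2 \<le> (norm b + (norm a + norm c))\<^sup>2" by (intro power_mono) auto
    also have "\<dots> \<le> 2 * (norm b)\<^sup>2 + 2 * (norm a + norm c)\<^sup>2"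
      using sum_squares_bound[of "norm b" "norm a + norm c"] by (simp add: power2_sum)
    also have "(norm a + norm c)\<^sup>2 \<le> 2 * (norm a)\<^sup>2 + 2 * (norm c)\<^sup>2"
      using sum_squares_bound[of "norm a" "norm c"] by (simp add: power2_sum)
    also have "(norm b)\<^sup>2 \<le> L\<^sup>2 * (norm p)\<^sup>2"
    proof -
      have "norm b \<le> L * norm p" using lipk by (simp add: b_def p_def)
      then have "(norm b)\<^sup>2 \<le> (L * norm p)\<^sup>2" by (intro power_mono) auto
      then show ?thesis by (simp add: power_mult_distrib)
    qed
    finally show ?thesis by simp
  qed
  have P7: "Fk \<bullet> d \<ge> (Fk - Fk1) \<bullet> d - norm (Fk1 - Gk1) * norm d + \<mu> * (norm d)\<^sup>2"
  proof -
    have "Fk \<bullet> d = (Fk - Fk1) \<bullet> d + (Fk1 - Gk1) \<bullet> d + Gk1 \<bullet> d"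
      by (simp add: inner_diff_left)
    moreover have "(Fk1 - Gk1) \<bullet> d \<ge> - (norm (Fk1 - Gk1) * norm d)"
      using Cauchy_Schwarz_ineq2[of "Fk1 - Gk1" d] by linarith
    moreover have "Gk1 \<bullet> d \<ge> \<mu> * (norm d)\<^sup>2" using strong by (simp add: d_def)
    ultimately show ?thesis by linarith
  qed
  have P8: "- (\<alpha> * \<mu> / 2 * (norm d)\<^sup>2) + \<alpha> * \<delta> * norm d \<le> \<alpha> * \<delta>\<^sup>2 / (2 * \<mu>)"
  proof -
    have "0 \<le> (\<mu> * norm d - \<delta>)\<^sup>2 / (2 * \<mu>)" using pos by simp
    also have "(\<mu> * norm d - \<delta>)\<^sup>2 / (2 * \<mu>) = \<mu> / 2 * (norm d)\<^sup>2 - \<delta> * norm d + \<delta>\<^sup>2 / (2 * \<mu>)"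
      using pos by (simp add: power2_diff field_simps power2_eq_square)
    finally have "- (\<mu> / 2 * (norm d)\<^sup>2) + \<delta> * norm d \<le> \<delta>\<^sup>2 / (2 * \<mu>)" by simp
    from mult_left_mono[OF this pos(2)] show ?thesis by (simp add: algebra_simps)
  qed
  have P7a: "\<alpha> * (Fk \<bullet> d) \<ge> \<alpha> * ((Fk - Fk1) \<bullet> d) - \<alpha> * (norm (Fk1 - Gk1) * norm d) + \<alpha> * \<mu> * (norm d)\<^sup>2"
    using mult_left_mono[OF P7 pos(2)] by (simp add: algebra_simps)
  have P6a: "\<tau>\<^sup>2 * (norm q)\<^sup>2 \<le> 2 * \<tau>\<^sup>2 * L\<^sup>2 * (norm p)\<^sup>2 + 4 * \<tau>\<^sup>2 * (norm a)\<^sup>2 + 4 * \<tau>\<^sup>2 * (norm c)\<^sup>2"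
    using mult_left_mono[OF P6, of "\<tau>\<^sup>2"] by (simp add: algebra_simps)
  have P4a: "\<tau> * (q \<bullet> d) = \<tau> * (q \<bullet> e) + \<tau> * (q \<bullet> t)" using P4 by (simp add: algebra_simps)
  have E1: "d \<bullet> (Fk - Fk1) = (Fk - Fk1) \<bullet> d" by (simp add: inner_commute)
  have E2: "e \<bullet> (Fkm - Fk) = - (q \<bullet> e)" by (simp add: q_def inner_commute inner_diff_left inner_diff_right)
  have E3: "norm (Fkm - Gkm) = norm c" by (simp add: c_def norm_minus_commute)
  show ?thesis
    unfolding d_def[symmetric] e_def[symmetric] t_def[symmetric] p_def[symmetric] a_def[symmetric]
    unfolding E1 E2 E3
    by (rule real_comb[OF P1 P2 P3 P4a P5 P6a P7a P8])
qed


locale emloc =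
  fixes Z :: "'a::euclidean_space set"
    and F :: "'a \<Rightarrow> 'a"
    and D :: "'x measure"
    and Fh :: "'a \<Rightarrow> 'x \<Rightarrow> 'a"
    and \<mu> L \<delta> \<sigma> \<alpha> \<gamma> \<tau> :: real
    and zs z0 :: 'a
  assumes Z: "Z \<noteq> {}" "closed Z" "convex Z"
    and mono: "\<And>z z'. z \<in> Z \<Longrightarrow> z' \<in> Z \<Longrightarrow> (F z - F z') \<bullet> (z - z') \<ge> \<mu> * (norm (z - z'))\<^sup>2"
    and lip: "\<And>z z'. z \<in> Z \<Longrightarrow> z' \<in> Z \<Longrightarrow> norm (F z - F z') \<le> L * norm (z - z')"
    and muL: "0 < \<mu>" "\<mu> \<le> L"
    and zs: "zs \<in> Z" "\<And>z. z \<in> Z \<Longrightarrow> F zs \<bullet> (z - zs) \<ge> 0"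
    and D: "prob_space D"
    and Fh_meas: "(\<lambda>(z, \<xi>). Fh z \<xi>) \<in> borel_measurable (borel \<Otimes>\<^sub>M D)"
    and bias: "\<And>z. z \<in> Z \<Longrightarrow> (\<integral>\<^sup>+ \<xi>. ennreal (norm (Fh z \<xi> - F z)) \<partial>D) \<le> ennreal \<delta>"
    and var: "\<And>z. z \<in> Z \<Longrightarrow> (\<integral>\<^sup>+ \<xi>. ennreal ((norm (Fh z \<xi> - F z))\<^sup>2) \<partial>D) \<le> ennreal (\<sigma>\<^sup>2)"
    and ds: "0 \<le> \<delta>" "0 \<le> \<sigma>"
    and params: "0 \<le> \<alpha>" "0 \<le> \<gamma>" "0 \<le> \<tau>"
    and z0: "z0 \<in> Z"
begin

sublocale SQ: sequence_space D
  by (simp add: sequence_space_def product_prob_space_def product_prob_space_axioms_def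
      product_sigma_finite_def D prob_space_imp_sigma_finite)

abbreviation "S \<equiv> (\<Pi>\<^sub>M i\<in>(UNIV::nat set). D)"

definition "z j w = em_iter Z Fh \<alpha> \<gamma> \<tau> z0 w j"
definition "Fz j w = Fh (z j w) (w j)"
definition "FF = F \<circ> closest_point Z"
definition "eps j w = Fz j w - FF (z j w)"

lemma z_in: "z j w \<in> Z"
  by (cases j) (auto simp: z_def z0 closest_point_in_set Z)

lemma FF_eq: "x \<in> Z \<Longrightarrow> FF x = F x"
  by (simp add: FF_def closest_point_self)

lemma FF_cont: "continuous_on UNIV FF"
proof -
  have "L-lipschitz_on Z F"
    using lip muL by (intro lipschitz_onI) (auto simp: dist_norm)
  then have "continuous_on Z F" by (rule lipschitz_on_continuous_on)
  moreover have "range (closest_point Z) \<subseteq> Z"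
    using closest_point_in_set Z by blast
  ultimately have "continuous_on (range (closest_point Z)) F"
    using continuous_on_subset by blast
  then show ?thesis unfolding FF_def
    by (intro continuous_on_compose continuous_on_closest_point Z)
qed

lemma FF_meas[measurable]: "FF \<in> borel_measurable borel"
  by (rule borel_measurable_continuous_onI[OF FF_cont])

lemma cp_meas[measurable]: "closest_point Z \<in> borel_measurable borel"
  by (rule borel_measurable_continuous_onI[OF continuous_on_closest_point[OF Z(3,2,1)]])

lemma Fh_comp_meas:
  assumes "u \<in> borel_measurable S"
  shows "(\<lambda>w. Fh (u w) (w j)) \<in> borel_measurable S"
proof -
  have "(\<lambda>w. (u w, w j)) \<in> measurable S (borel \<Otimes>\<^sub>M D)"
    using assms by (intro measurable_Pair) (auto intro!: measurable_component_singleton)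
  from measurable_compose[OF this Fh_meas] show ?thesis by simp
qed

lemma z_meas[measurable]: "z j \<in> borel_measurable S"
proof (induction j rule: less_induct)
  case (less j)
  show ?case
  proof (cases j)
    case 0 then show ?thesis by (simp add: z_def[abs_def])
  next
    case (Suc k)
    have a: "z k \<in> borel_measurable S" "z (k-1) \<in> borel_measurable S"
      using less Suc by auto
    have b: "(\<lambda>w. Fh (z k w) (w k)) \<in> borel_measurable S" "(\<lambda>w. Fh (z (k-1) w) (w (k-1))) \<in> borel_measurable S"
      using Fh_comp_meas a by auto
    have eq: "z j = (\<lambda>w. closest_point Z (z k w - \<alpha> *\<^sub>R Fh (z k w) (w k) + \<gamma> *\<^sub>R (z k w - z (k-1) w)
         - \<tau> *\<^sub>R (Fh (z k w) (w k) - Fh (z (k-1) w) (w (k-1)))))"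
      by (simp add: Suc z_def[abs_def])
    show ?thesis unfolding eq using a b by measurable
  qed
qed

lemma Fz_meas[measurable]: "Fz j \<in> borel_measurable S"
  unfolding Fz_def[abs_def] by (rule Fh_comp_meas) simp

lemma eps_meas[measurable]: "eps j \<in> borel_measurable S"
  unfolding eps_def[abs_def] by measurable

lemma z_dep: "(\<And>i. i < j \<Longrightarrow> w i = w' i) \<Longrightarrow> z j w = z j w'"
proof (induction j rule: less_induct)
  case (less j)
  show ?case
  proof (cases j)
    case 0 then show ?thesis by (simp add: z_def)
  next
    case (Suc k)
    have "z k w = z k w'" "z (k-1) w = z (k-1) w'" "w k = w' k" "w (k-1) = w' (k-1)"
      using less Suc by auto
    then show ?thesis by (simp add: Suc z_def)
  qed
qed

lemma indep:
  fixes g :: "(nat \<Rightarrow> 'x) \<Rightarrow> ennreal" and h :: "'a \<Rightarrow> 'x \<Rightarrow> ennreal"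
  assumes u: "u \<in> borel_measurable S" "\<And>w. u w \<in> Z"
      "\<And>w w'. (\<And>i. i < j \<Longrightarrow> w i = w' i) \<Longrightarrow> u w = u w'"
    and g: "g \<in> borel_measurable S" "\<And>w w'. (\<And>i. i < j \<Longrightarrow> w i = w' i) \<Longrightarrow> g w = g w'"
    and h: "(\<lambda>(x, \<xi>). h x \<xi>) \<in> borel_measurable (borel \<Otimes>\<^sub>M D)"
      "\<And>x. x \<in> Z \<Longrightarrow> (\<integral>\<^sup>+ \<xi>. h x \<xi> \<partial>D) \<le> c"
  shows "(\<integral>\<^sup>+ w. g w * h (u w) (w j) \<partial>S) \<le> (\<integral>\<^sup>+ w. g w \<partial>S) * c"
proof -
  define f where "f w = g w * h (u w) (w j)" for w
  have hm: "(\<lambda>w. h (u w) (w j)) \<in> borel_measurable S"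
  proof -
    have "(\<lambda>w. (u w, w j)) \<in> measurable S (borel \<Otimes>\<^sub>M D)"
      using u(1) by (intro measurable_Pair) (auto intro!: measurable_component_singleton)
    from measurable_compose[OF this h(1)] show ?thesis by simp
  qed
  have fm: "f \<in> borel_measurable S" unfolding f_def[abs_def] using g(1) hm by measurable
  let ?c = "\<lambda>(\<omega>, \<omega>'). comb_seq j \<omega> \<omega>'"
  have "(\<integral>\<^sup>+ w. f w \<partial>S) = (\<integral>\<^sup>+ w. f w \<partial>distr (S \<Otimes>\<^sub>M S) S ?c)"
    by (subst SQ.PiM_comb_seq) (rule refl)
  also have "\<dots> = (\<integral>\<^sup>+ p. f (?c p) \<partial>(S \<Otimes>\<^sub>M S))"
    by (rule nn_integral_distr[OF measurable_comb_seq]) (simp add: fm)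
  also have "\<dots> = (\<integral>\<^sup>+ \<omega>. \<integral>\<^sup>+ \<omega>'. f (comb_seq j \<omega> \<omega>') \<partial>S \<partial>S)"
    using SQ.nn_integral_fst[OF measurable_compose[OF measurable_comb_seq fm]] by simp
  also have "\<dots> = (\<integral>\<^sup>+ \<omega>. \<integral>\<^sup>+ \<omega>'. g \<omega> * h (u \<omega>) (\<omega>' 0) \<partial>S \<partial>S)"
  proof (intro nn_integral_cong)
    fix \<omega> \<omega>' :: "nat \<Rightarrow> 'x"
    have a: "\<And>i. i < j \<Longrightarrow> comb_seq j \<omega> \<omega>' i = \<omega> i" by (simp add: comb_seq_less)
    have b: "comb_seq j \<omega> \<omega>' j = \<omega>' 0" using comb_seq_add[of j \<omega> \<omega>' 0] by simp
    show "f (comb_seq j \<omega> \<omega>') = g \<omega> * h (u \<omega>) (\<omega>' 0)"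
      unfolding f_def using u(3)[OF a] g(2)[OF a] b by simp
  qed
  also have "\<dots> = (\<integral>\<^sup>+ \<omega>. g \<omega> * \<integral>\<^sup>+ \<omega>'. h (u \<omega>) (\<omega>' 0) \<partial>S \<partial>S)"
  proof (intro nn_integral_cong nn_integral_cmult)
    fix \<omega>
    have "(\<lambda>\<xi>. h (u \<omega>) \<xi>) \<in> borel_measurable D"
      using measurable_Pair2[OF h(1), of "u \<omega>"] by simp
    then show "(\<lambda>\<omega>'. h (u \<omega>) (\<omega>' 0)) \<in> borel_measurable S"
      by (rule measurable_compose[rotated]) (auto intro!: measurable_component_singleton)
  qed
  also have "\<dots> = (\<integral>\<^sup>+ \<omega>. g \<omega> * \<integral>\<^sup>+ \<xi>. h (u \<omega>) \<xi> \<partial>D \<partial>S)"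
  proof (intro nn_integral_cong arg_cong2[where f="(*)"] refl)
    fix \<omega>
    have hm2: "(\<lambda>\<xi>. h (u \<omega>) \<xi>) \<in> borel_measurable D"
      using measurable_Pair2[OF h(1), of "u \<omega>"] by simp
    have "(\<integral>\<^sup>+ \<xi>. h (u \<omega>) \<xi> \<partial>D) = (\<integral>\<^sup>+ \<xi>. h (u \<omega>) \<xi> \<partial>distr S D (\<lambda>\<omega>. \<omega> 0))"
      by (subst SQ.PiM_component) auto
    also have "\<dots> = (\<integral>\<^sup>+ \<omega>'. h (u \<omega>) (\<omega>' 0) \<partial>S)"
      by (rule nn_integral_distr) (auto intro!: measurable_component_singleton hm2)
    finally show "(\<integral>\<^sup>+ \<omega>'. h (u \<omega>) (\<omega>' 0) \<partial>S) = (\<integral>\<^sup>+ \<xi>. h (u \<omega>) \<xi> \<partial>D)" ..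
  qed
  also have "\<dots> \<le> (\<integral>\<^sup>+ \<omega>. g \<omega> * c \<partial>S)"
    by (intro nn_integral_mono mult_left_mono h(2) u(2)) simp
  also have "\<dots> = (\<integral>\<^sup>+ w. g w \<partial>S) * c"
    using g(1) by (rule nn_integral_multc)
  finally show ?thesis unfolding f_def .
qed

definition "sqi f \<longleftrightarrow> f \<in> borel_measurable S \<and> integrable S (\<lambda>w. (norm (f w :: 'a))\<^sup>2)"

lemma sqi_const: "sqi (\<lambda>w. c)"
  unfolding sqi_def by simp

lemma sqi_bound:
  assumes "sqi g" "f \<in> borel_measurable S" "\<And>w. norm (f w) \<le> norm (g w)"
  shows "sqi f"
  unfolding sqi_def
proof
  show "f \<in> borel_measurable S" by fact
  show "integrable S (\<lambda>w. (norm (f w))\<^sup>2)"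
    by (rule Bochner_Integration.integrable_bound[where f="\<lambda>w. (norm (g w))\<^sup>2"]) 
       (use assms in \<open>auto simp: sqi_def intro!: power_mono\<close>)
qed

lemma sqi_add:
  assumes "sqi f" "sqi g"
  shows "sqi (\<lambda>w. f w + g w)"
  unfolding sqi_def
proof
  have [measurable]: "f \<in> borel_measurable S" "g \<in> borel_measurable S" using assms by (auto simp: sqi_def)
  show m: "(\<lambda>w. f w + g w) \<in> borel_measurable S" by measurable
  have "integrable S (\<lambda>w. 2 * (norm (f w))\<^sup>2 + 2 * (norm (g w))\<^sup>2)"
    using assms by (simp add: sqi_def)
  then show "integrable S (\<lambda>w. (norm (f w + g w))\<^sup>2)"
  proof (rule Bochner_Integration.integrable_bound)
    show "(\<lambda>w. (norm (f w + g w))\<^sup>2) \<in> borel_measurable S" using m by measurable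
    show "AE w in S. norm ((norm (f w + g w))\<^sup>2) \<le> norm (2 * (norm (f w))\<^sup>2 + 2 * (norm (g w))\<^sup>2)"
    proof (intro AE_I2)
      fix w
      have "norm (f w + g w) \<le> norm (f w) + norm (g w)" by (rule norm_triangle_ineq)
      then have "(norm (f w + g w))\<^sup>2 \<le> (norm (f w) + norm (g w))\<^sup>2"
        by (intro power_mono) auto
      also have "\<dots> \<le> 2 * (norm (f w))\<^sup>2 + 2 * (norm (g w))\<^sup>2"
        by (smt (verit) sum_squares_bound zero_le_power2 power2_sum)
      finally show "norm ((norm (f w + g w))\<^sup>2) \<le> norm (2 * (norm (f w))\<^sup>2 + 2 * (norm (g w))\<^sup>2)"
        by simp
    qed
  qed
qed

lemma sqi_scale:
  assumes "sqi f"
  shows "sqi (\<lambda>w. c *\<^sub>R f w)"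
proof -
  have [measurable]: "f \<in> borel_measurable S" using assms by (auto simp: sqi_def)
  show ?thesis using assms unfolding sqi_def by (simp add: power_mult_distrib)
qed

lemma sqi_minus: "sqi f \<Longrightarrow> sqi (\<lambda>w. - f w)"
  unfolding sqi_def by simp

lemma sqi_diff: "sqi f \<Longrightarrow> sqi g \<Longrightarrow> sqi (\<lambda>w. f w - g w)"
  using sqi_add[OF _ sqi_minus, of f g] by simp

lemma sqi_meas: "sqi f \<Longrightarrow> f \<in> borel_measurable S"
  by (simp add: sqi_def)

lemma sqi_sq: "sqi f \<Longrightarrow> integrable S (\<lambda>w. (norm (f w))\<^sup>2)"
  by (simp add: sqi_def)

lemma ab_le: "0 \<le> a \<Longrightarrow> 0 \<le> (b::real) \<Longrightarrow> a * b \<le> a\<^sup>2 + b\<^sup>2"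
  using sum_squares_bound[of a b] mult_nonneg_nonneg[of a b] by linarith

lemma sqi_prod:
  assumes "sqi f" "sqi g"
  shows "integrable S (\<lambda>w. norm (f w) * norm (g w))"
proof (rule Bochner_Integration.integrable_bound)
  show "integrable S (\<lambda>w. (norm (f w))\<^sup>2 + (norm (g w))\<^sup>2)"
    using assms by (simp add: sqi_def)
  show "(\<lambda>w. norm (f w) * norm (g w)) \<in> borel_measurable S"
  proof -
    have [measurable]: "f \<in> borel_measurable S" "g \<in> borel_measurable S" using assms by (auto simp: sqi_def)
    show ?thesis by measurable
  qed
  show "AE w in S. norm (norm (f w) * norm (g w)) \<le> norm ((norm (f w))\<^sup>2 + (norm (g w))\<^sup>2)"
  proof (intro AE_I2)
    fix w
    have "norm (f w) * norm (g w) \<le> (norm (f w))\<^sup>2 + (norm (g w))\<^sup>2"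
      by (rule ab_le) auto
    then show "norm (norm (f w) * norm (g w)) \<le> norm ((norm (f w))\<^sup>2 + (norm (g w))\<^sup>2)"
      by simp
  qed
qed

lemma sqi_inner:
  assumes "sqi f" "sqi g"
  shows "integrable S (\<lambda>w. f w \<bullet> g w)"
proof (rule Bochner_Integration.integrable_bound)
  show "integrable S (\<lambda>w. norm (f w) * norm (g w))" using sqi_prod[OF assms] .
  show "(\<lambda>w. f w \<bullet> g w) \<in> borel_measurable S"
  proof -
    have [measurable]: "f \<in> borel_measurable S" "g \<in> borel_measurable S" using assms by (auto simp: sqi_def)
    show ?thesis by measurable
  qed
  show "AE w in S. norm (f w \<bullet> g w) \<le> norm (norm (f w) * norm (g w))"
  proof (intro AE_I2)
    fix w
    show "norm (f w \<bullet> g w) \<le> norm (norm (f w) * norm (g w))"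
      using Cauchy_Schwarz_ineq2[of "f w" "g w"] by simp
  qed
qed

lemma sqi_norm:
  assumes "sqi f"
  shows "integrable S (\<lambda>w. norm (f w))"
proof -
  obtain e :: 'a where e: "norm e = 1" using norm_Basis[OF SOME_Basis] by blast
  from sqi_prod[OF assms sqi_const[of e]] show ?thesis using e by simp
qed

lemma eps_nn:
  fixes g :: "(nat \<Rightarrow> 'x) \<Rightarrow> ennreal"
  assumes g: "g \<in> borel_measurable S" "\<And>w w'. (\<And>i. i < j \<Longrightarrow> w i = w' i) \<Longrightarrow> g w = g w'"
  shows "(\<integral>\<^sup>+ w. g w * ennreal (norm (eps j w)) \<partial>S) \<le> (\<integral>\<^sup>+ w. g w \<partial>S) * ennreal \<delta>"
    and "(\<integral>\<^sup>+ w. g w * ennreal ((norm (eps j w))\<^sup>2) \<partial>S) \<le> (\<integral>\<^sup>+ w. g w \<partial>S) * ennreal (\<sigma>\<^sup>2)"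
proof -
  have hm: "(\<lambda>(x, \<xi>). Fh x \<xi> - FF x) \<in> borel_measurable (borel \<Otimes>\<^sub>M D)"
  proof -
    have "(\<lambda>p. FF (fst p)) \<in> borel_measurable (borel \<Otimes>\<^sub>M D)" by measurable
    then show ?thesis using Fh_meas
      by (subst split_beta') (rule borel_measurable_diff; simp add: split_beta')
  qed
  have hm'[measurable]: "(\<lambda>p. Fh (fst p) (snd p) - FF (fst p)) \<in> borel_measurable (borel \<Otimes>\<^sub>M D)"
    using hm by (simp add: split_beta')
  have u: "z j \<in> borel_measurable S" "\<And>w. z j w \<in> Z"
      "\<And>w w'. (\<And>i. i < j \<Longrightarrow> w i = w' i) \<Longrightarrow> z j w = z j w'"
    by (rule z_meas, rule z_in, rule z_dep, blast)
  have e: "eps j w = Fh (z j w) (w j) - FF (z j w)" for w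
    by (simp add: eps_def Fz_def)
  show "(\<integral>\<^sup>+ w. g w * ennreal (norm (eps j w)) \<partial>S) \<le> (\<integral>\<^sup>+ w. g w \<partial>S) * ennreal \<delta>"
    unfolding e
  proof (rule indep[OF u g, where h="\<lambda>x \<xi>. ennreal (norm (Fh x \<xi> - FF x))"])
    show "(\<lambda>(x, \<xi>). ennreal (norm (Fh x \<xi> - FF x))) \<in> borel_measurable (borel \<Otimes>\<^sub>M D)"
      unfolding split_beta' by measurable
    show "(\<integral>\<^sup>+ \<xi>. ennreal (norm (Fh x \<xi> - FF x)) \<partial>D) \<le> ennreal \<delta>" if "x \<in> Z" for x
      using bias[OF that] FF_eq[OF that] by simp
  qed
  show "(\<integral>\<^sup>+ w. g w * ennreal ((norm (eps j w))\<^sup>2) \<partial>S) \<le> (\<integral>\<^sup>+ w. g w \<partial>S) * ennreal (\<sigma>\<^sup>2)"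
    unfolding e
  proof (rule indep[OF u g, where h="\<lambda>x \<xi>. ennreal ((norm (Fh x \<xi> - FF x))\<^sup>2)"])
    show "(\<lambda>(x, \<xi>). ennreal ((norm (Fh x \<xi> - FF x))\<^sup>2)) \<in> borel_measurable (borel \<Otimes>\<^sub>M D)"
      unfolding split_beta' by measurable
    show "(\<integral>\<^sup>+ \<xi>. ennreal ((norm (Fh x \<xi> - FF x))\<^sup>2) \<partial>D) \<le> ennreal (\<sigma>\<^sup>2)" if "x \<in> Z" for x
      using var[OF that] FF_eq[OF that] by simp
  qed
qed

lemma eps_sq: "(\<integral>\<^sup>+ w. ennreal ((norm (eps j w))\<^sup>2) \<partial>S) \<le> ennreal (\<sigma>\<^sup>2)"
  using eps_nn(2)[of "\<lambda>_. 1" j] by (simp add: SQ.P.emeasure_space_1)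

lemma eps_sqi: "sqi (eps j)"
  unfolding sqi_def
proof
  show "eps j \<in> borel_measurable S" by simp
  show "integrable S (\<lambda>w. (norm (eps j w))\<^sup>2)"
  proof (rule integrableI_bounded)
    show "(\<lambda>w. (norm (eps j w))\<^sup>2) \<in> borel_measurable S" by simp
    have "(\<integral>\<^sup>+ w. ennreal (norm ((norm (eps j w))\<^sup>2)) \<partial>S) \<le> ennreal (\<sigma>\<^sup>2)"
      using eps_sq[of j] by simp
    then show "(\<integral>\<^sup>+ w. ennreal (norm ((norm (eps j w))\<^sup>2)) \<partial>S) < \<infinity>"
      using le_less_trans by fastforce
  qed
qed

lemma FFz_sqi:
  assumes "sqi (\<lambda>w. z j w - zs)"
  shows "sqi (\<lambda>w. FF (z j w))"
proof -
  have a: "sqi (\<lambda>w. L *\<^sub>R (z j w - zs))" by (rule sqi_scale[OF assms])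
  have "sqi (\<lambda>w. FF (z j w) - F zs)"
  proof (rule sqi_bound[OF a])
    show "(\<lambda>w. FF (z j w) - F zs) \<in> borel_measurable S" by measurable
    fix w
    have "norm (FF (z j w) - F zs) \<le> L * norm (z j w - zs)"
      using lip[OF z_in zs(1)] FF_eq[OF z_in] by simp
    also have "\<dots> = norm (L *\<^sub>R (z j w - zs))" using muL by simp
    finally show "norm (FF (z j w) - F zs) \<le> norm (L *\<^sub>R (z j w - zs))" .
  qed
  from sqi_add[OF this sqi_const[of "F zs"]] show ?thesis by simp
qed

lemma Fz_sqi:
  assumes "sqi (\<lambda>w. z j w - zs)"
  shows "sqi (Fz j)"
proof -
  have "Fz j w = eps j w + FF (z j w)" for w by (simp add: eps_def)
  then have "Fz j = (\<lambda>w. eps j w + FF (z j w))" by auto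
  then show ?thesis using sqi_add[OF eps_sqi FFz_sqi[OF assms]] by simp
qed

lemma z_sqi: "sqi (\<lambda>w. z j w - zs)"
proof (induction j rule: less_induct)
  case (less j)
  show ?case
  proof (cases j)
    case 0 then show ?thesis by (simp add: z_def sqi_const)
  next
    case (Suc k)
    have a: "sqi (\<lambda>w. z k w - zs)" "sqi (\<lambda>w. z (k-1) w - zs)"
      using less Suc by auto
    have b: "sqi (Fz k)" "sqi (Fz (k-1))" using Fz_sqi a by auto
    let ?y = "\<lambda>w. z k w - \<alpha> *\<^sub>R Fz k w + \<gamma> *\<^sub>R (z k w - z (k-1) w) - \<tau> *\<^sub>R (Fz k w - Fz (k-1) w)"
    have eq: "z j w = closest_point Z (?y w)" for w
      by (simp add: Suc z_def Fz_def)
    have yz: "?y w - zs = (z k w - zs) - \<alpha> *\<^sub>R Fz k w + \<gamma> *\<^sub>R ((z k w - zs) - (z (k-1) w - zs))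
       - \<tau> *\<^sub>R (Fz k w - Fz (k-1) w)" for w
      by (simp add: algebra_simps)
    have c: "sqi (\<lambda>w. ?y w - zs)" unfolding yz
      by (intro sqi_add sqi_diff sqi_scale a b)
    show ?thesis
    proof (rule sqi_bound[OF c])
      show "(\<lambda>w. z j w - zs) \<in> borel_measurable S" by measurable
      fix w
      have "dist (closest_point Z (?y w)) (closest_point Z zs) \<le> dist (?y w) zs"
        by (rule closest_point_lipschitz[OF Z(3,2,1)])
      then show "norm (z j w - zs) \<le> norm (?y w - zs)"
        by (simp add: eq closest_point_self[OF zs(1)] dist_norm)
    qed
  qed
qed

lemma pointwise:
  "(1/2 + \<alpha> * \<mu> / 2 - \<gamma> / 2) * (norm (z (Suc k) w - zs))\<^sup>2
     + \<alpha> * ((z (Suc k) w - zs) \<bullet> (Fz k w - Fz (Suc k) w))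
     + 1/4 * (norm (z (Suc k) w - z k w))\<^sup>2
   \<le> 1/2 * (norm (z k w - zs))\<^sup>2 + \<tau> * ((z k w - zs) \<bullet> (Fz (k - 1) w - Fz k w))
     + (2 * \<tau>\<^sup>2 * L\<^sup>2 + \<gamma> / 2) * (norm (z k w - z (k - 1) w))\<^sup>2
     + 4 * \<tau>\<^sup>2 * (norm (eps k w))\<^sup>2 + 4 * \<tau>\<^sup>2 * (norm (eps (k-1) w))\<^sup>2
     + \<alpha> * (norm (eps (Suc k) w) * norm (z (Suc k) w - zs) - \<delta> * norm (z (Suc k) w - zs))
     + \<alpha> * \<delta>\<^sup>2 / (2 * \<mu>)"
proof -
  let ?y = "z k w - \<alpha> *\<^sub>R Fz k w + \<gamma> *\<^sub>R (z k w - z (k-1) w) - \<tau> *\<^sub>R (Fz k w - Fz (k-1) w)"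
  have eq: "z (Suc k) w = closest_point Z ?y"
    by (simp add: z_def Fz_def)
  have proj: "(?y - z (Suc k) w) \<bullet> (zs - z (Suc k) w) \<le> 0"
    unfolding eq by (rule closest_point_dot[OF Z(3,2) zs(1)])
  have strong: "\<mu> * (norm (z (Suc k) w - zs))\<^sup>2 \<le> FF (z (Suc k) w) \<bullet> (z (Suc k) w - zs)"
  proof -
    have "\<mu> * (norm (z (Suc k) w - zs))\<^sup>2 \<le> (F (z (Suc k) w) - F zs) \<bullet> (z (Suc k) w - zs)"
      by (rule mono[OF z_in zs(1)])
    moreover have "F zs \<bullet> (z (Suc k) w - zs) \<ge> 0" by (rule zs(2)[OF z_in])
    ultimately show ?thesis using FF_eq[OF z_in] by (simp add: inner_diff_left)
  qed
  have lipk: "norm (FF (z k w) - FF (z (k-1) w)) \<le> L * norm (z k w - z (k-1) w)"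
    using lip[OF z_in z_in] FF_eq[OF z_in] by simp
  have "L \<ge> 0" using muL by simp
  from pw[OF proj strong lipk muL(1) params this, where \<delta>=\<delta>]
  show ?thesis by (simp add: eps_def)
qed

lemma int_le:
  assumes "integrable S f" "f \<in> borel_measurable S" "\<And>w. 0 \<le> f w"
    and "(\<integral>\<^sup>+ w. ennreal (f w) \<partial>S) \<le> ennreal c" "0 \<le> c"
  shows "(\<integral>w. f w \<partial>S) \<le> c"
proof -
  have "ennreal (\<integral>w. f w \<partial>S) = (\<integral>\<^sup>+ w. ennreal (f w) \<partial>S)"
    using assms by (intro nn_integral_eq_integral[symmetric]) auto
  with assms(4) have "ennreal (\<integral>w. f w \<partial>S) \<le> ennreal c" by simp
  with assms(5) show ?thesis by (simp add: ennreal_le_iff)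
qed

lemma main:
  "(\<integral>w. ((1/2 + \<alpha> * \<mu> / 2 - \<gamma> / 2) * (norm (z (Suc k) w - zs))\<^sup>2
     + \<alpha> * ((z (Suc k) w - zs) \<bullet> (Fz k w - Fz (Suc k) w))
     + 1/4 * (norm (z (Suc k) w - z k w))\<^sup>2) \<partial>S)
   \<le> (\<integral>w. (1/2 * (norm (z k w - zs))\<^sup>2 + \<tau> * ((z k w - zs) \<bullet> (Fz (k - 1) w - Fz k w))
     + (2 * \<tau>\<^sup>2 * L\<^sup>2 + \<gamma> / 2) * (norm (z k w - z (k - 1) w))\<^sup>2) \<partial>S)
     + 8 * \<tau>\<^sup>2 * \<sigma>\<^sup>2 + \<alpha> * \<delta>\<^sup>2 / (2 * \<mu>)"
  (is "integral\<^sup>L S ?L \<le> integral\<^sup>L S ?R + _ + _")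
proof -
  define A where "A w = (norm (eps k w))\<^sup>2" for w
  define B where "B w = (norm (eps (k-1) w))\<^sup>2" for w
  define C where "C w = norm (eps (Suc k) w) * norm (z (Suc k) w - zs)" for w
  define N where "N w = norm (z (Suc k) w - zs)" for w
  have sz: "sqi (\<lambda>w. z (Suc k) w - zs)" "sqi (\<lambda>w. z k w - zs)" "sqi (\<lambda>w. z (k-1) w - zs)"
    by (rule z_sqi)+
  have sF: "sqi (Fz (Suc k))" "sqi (Fz k)" "sqi (Fz (k-1))"
    using Fz_sqi z_sqi by auto
  have d1: "(\<lambda>w. z (Suc k) w - z k w) = (\<lambda>w. (z (Suc k) w - zs) - (z k w - zs))" by auto
  have d2: "(\<lambda>w. z k w - z (k-1) w) = (\<lambda>w. (z k w - zs) - (z (k-1) w - zs))" by auto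
  have st: "sqi (\<lambda>w. z (Suc k) w - z k w)" unfolding d1 by (rule sqi_diff[OF sz(1,2)])
  have sp: "sqi (\<lambda>w. z k w - z (k-1) w)" unfolding d2 by (rule sqi_diff[OF sz(2,3)])
  have iL: "integrable S ?L"
    using sqi_sq[OF sz(1)] sqi_inner[OF sz(1) sqi_diff[OF sF(2,1)]] sqi_sq[OF st] by simp
  have iR: "integrable S ?R"
    using sqi_sq[OF sz(2)] sqi_inner[OF sz(2) sqi_diff[OF sF(3,2)]] sqi_sq[OF sp] by simp
  have iA: "integrable S A" unfolding A_def[abs_def] by (rule sqi_sq[OF eps_sqi])
  have iB: "integrable S B" unfolding B_def[abs_def] by (rule sqi_sq[OF eps_sqi])
  have iC: "integrable S C" unfolding C_def[abs_def] by (rule sqi_prod[OF eps_sqi sz(1)])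
  have iN: "integrable S N" unfolding N_def[abs_def] by (rule sqi_norm[OF sz(1)])
  have A_le: "(\<integral>w. A w \<partial>S) \<le> \<sigma>\<^sup>2"
  proof (rule int_le[OF iA])
    show "A \<in> borel_measurable S" unfolding A_def[abs_def] by measurable
  qed (auto simp: A_def eps_sq)
  have B_le: "(\<integral>w. B w \<partial>S) \<le> \<sigma>\<^sup>2"
  proof (rule int_le[OF iB])
    show "B \<in> borel_measurable S" unfolding B_def[abs_def] by measurable
  qed (auto simp: B_def eps_sq)
  have C_le: "(\<integral>w. C w \<partial>S) \<le> \<delta> * (\<integral>w. N w \<partial>S)"
  proof -
    have gm: "(\<lambda>w. ennreal (N w)) \<in> borel_measurable S" unfolding N_def by measurable
    have gd: "ennreal (N w) = ennreal (N w')" if "\<And>i. i < Suc k \<Longrightarrow> w i = w' i" for w w'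
      unfolding N_def using z_dep[of "Suc k" w w'] that by simp
    have "(\<integral>\<^sup>+ w. ennreal (N w) * ennreal (norm (eps (Suc k) w)) \<partial>S) \<le> (\<integral>\<^sup>+ w. ennreal (N w) \<partial>S) * ennreal \<delta>"
      by (rule eps_nn(1)[OF gm gd]) blast
    moreover have "(\<integral>\<^sup>+ w. ennreal (N w) * ennreal (norm (eps (Suc k) w)) \<partial>S) = ennreal (\<integral>w. C w \<partial>S)"
    proof -
      have "(\<integral>\<^sup>+ w. ennreal (N w) * ennreal (norm (eps (Suc k) w)) \<partial>S) = (\<integral>\<^sup>+ w. ennreal (C w) \<partial>S)"
        by (intro nn_integral_cong) (simp add: C_def N_def ennreal_mult' mult.commute)
      also have "\<dots> = ennreal (\<integral>w. C w \<partial>S)"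
        by (rule nn_integral_eq_integral[OF iC]) (simp add: C_def)
      finally show ?thesis .
    qed
    moreover have "(\<integral>\<^sup>+ w. ennreal (N w) \<partial>S) = ennreal (\<integral>w. N w \<partial>S)"
      by (rule nn_integral_eq_integral[OF iN]) (simp add: N_def)
    ultimately have "ennreal (\<integral>w. C w \<partial>S) \<le> ennreal (\<integral>w. N w \<partial>S) * ennreal \<delta>" by simp
    also have "\<dots> = ennreal (\<delta> * (\<integral>w. N w \<partial>S))"
      using ds by (simp add: ennreal_mult' mult.commute)
    finally show ?thesis
      using ds by (simp add: ennreal_le_iff N_def)
  qed
  let ?E = "\<lambda>w. 4 * \<tau>\<^sup>2 * A w + 4 * \<tau>\<^sup>2 * B w + \<alpha> * (C w - \<delta> * N w) + \<alpha> * \<delta>\<^sup>2 / (2 * \<mu>)"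
  have iE: "integrable S ?E" using iA iB iC iN by simp
  have "integral\<^sup>L S ?L \<le> (\<integral>w. ?R w + ?E w \<partial>S)"
  proof (rule integral_mono)
    show "integrable S ?L" by (rule iL)
    show "integrable S (\<lambda>w. ?R w + ?E w)" using iR iE by simp
    fix w show "?L w \<le> ?R w + ?E w"
      using pointwise[of k w] by (simp add: A_def B_def C_def N_def algebra_simps)
  qed
  also have "\<dots> = integral\<^sup>L S ?R + integral\<^sup>L S ?E"
    by (rule Bochner_Integration.integral_add[OF iR iE])
  also have "integral\<^sup>L S ?E = 4 * \<tau>\<^sup>2 * (\<integral>w. A w \<partial>S) + 4 * \<tau>\<^sup>2 * (\<integral>w. B w \<partial>S)
      + \<alpha> * ((\<integral>w. C w \<partial>S) - \<delta> * (\<integral>w. N w \<partial>S)) + \<alpha> * \<delta>\<^sup>2 / (2 * \<mu>)"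
    using iA iB iC iN by (simp add: SQ.P.prob_space)
  also have "\<dots> \<le> 8 * \<tau>\<^sup>2 * \<sigma>\<^sup>2 + \<alpha> * \<delta>\<^sup>2 / (2 * \<mu>)"
  proof -
    have "4 * \<tau>\<^sup>2 * (\<integral>w. A w \<partial>S) \<le> 4 * \<tau>\<^sup>2 * \<sigma>\<^sup>2" using A_le by (intro mult_left_mono) auto
    moreover have "4 * \<tau>\<^sup>2 * (\<integral>w. B w \<partial>S) \<le> 4 * \<tau>\<^sup>2 * \<sigma>\<^sup>2" using B_le by (intro mult_left_mono) auto
    moreover have "\<alpha> * ((\<integral>w. C w \<partial>S) - \<delta> * (\<integral>w. N w \<partial>S)) \<le> 0"
      using C_le params(1) by (simp add: mult_nonneg_nonpos)
    ultimately show ?thesis by linarith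
  qed
  finally show ?thesis by linarith
qed

end

theorem lemma2:
  fixes Z :: "'a::euclidean_space set"
    and F :: "'a \<Rightarrow> 'a"
    and D :: "'x measure"
    and Fh :: "'a \<Rightarrow> 'x \<Rightarrow> 'a"
    and \<mu> L \<delta> \<sigma> \<alpha> \<gamma> \<tau> :: real
    and zs z0 :: 'a
    and k :: nat
  assumes Z: "Z \<noteq> {}" "closed Z" "convex Z"
    and mono: "\<And>z z'. z \<in> Z \<Longrightarrow> z' \<in> Z \<Longrightarrow> (F z - F z') \<bullet> (z - z') \<ge> \<mu> * (norm (z - z'))\<^sup>2"
    and lip: "\<And>z z'. z \<in> Z \<Longrightarrow> z' \<in> Z \<Longrightarrow> norm (F z - F z') \<le> L * norm (z - z')"
    and muL: "0 < \<mu>" "\<mu> \<le> L"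
    and zs: "zs \<in> Z" "\<And>z. z \<in> Z \<Longrightarrow> F zs \<bullet> (z - zs) \<ge> 0"
    and D: "prob_space D"
    and Fh_meas: "(\<lambda>(z, \<xi>). Fh z \<xi>) \<in> borel_measurable (borel \<Otimes>\<^sub>M D)"
    and bias: "\<And>z. z \<in> Z \<Longrightarrow> (\<integral>\<^sup>+ \<xi>. ennreal (norm (Fh z \<xi> - F z)) \<partial>D) \<le> ennreal \<delta>"
    and var: "\<And>z. z \<in> Z \<Longrightarrow> (\<integral>\<^sup>+ \<xi>. ennreal ((norm (Fh z \<xi> - F z))\<^sup>2) \<partial>D) \<le> ennreal (\<sigma>\<^sup>2)"
    and ds: "0 \<le> \<delta>" "0 \<le> \<sigma>"
    and params: "0 \<le> \<alpha>" "0 \<le> \<gamma>" "0 \<le> \<tau>"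
    and z0: "z0 \<in> Z"
  shows
    "(let M = (\<Pi>\<^sub>M i\<in>UNIV. D);
          z = (\<lambda>j w. em_iter Z Fh \<alpha> \<gamma> \<tau> z0 w j);
          Fz = (\<lambda>j w. Fh (z j w) (w j))
      in (\<integral>w. ((1/2 + \<alpha> * \<mu> / 2 - \<gamma> / 2) * (norm (z (Suc k) w - zs))\<^sup>2
                  + \<alpha> * ((z (Suc k) w - zs) \<bullet> (Fz k w - Fz (Suc k) w))
                  + 1/4 * (norm (z (Suc k) w - z k w))\<^sup>2) \<partial>M)
         \<le> (\<integral>w. (1/2 * (norm (z k w - zs))\<^sup>2
                  + \<tau> * ((z k w - zs) \<bullet> (Fz (k - 1) w - Fz k w))
                  + (2 * \<tau>\<^sup>2 * L\<^sup>2 + \<gamma> / 2) * (norm (z k w - z (k - 1) w))\<^sup>2) \<partial>M)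
           + 8 * \<tau>\<^sup>2 * \<sigma>\<^sup>2 + \<alpha> * \<delta>\<^sup>2 / (2 * \<mu>))"
proof -
  interpret E: emloc Z F D Fh \<mu> L \<delta> \<sigma> \<alpha> \<gamma> \<tau> zs z0
    by (rule emloc.intro) (fact Z mono lip muL zs D Fh_meas bias var ds params z0)+
  show ?thesis
    using E.main[of k] unfolding E.Fz_def E.z_def Let_def .
qed

end
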